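(* Let $I\subseteq\mathfrak{M}$ be an ideal of $P$, let $Z=\{z_1,\dots,z_s\}$ be a set of $s\ge 1$ distinct indeterminates in $X$, and let $\sigma$ be a $Z$-separating term ordering for $I$. (a) The reduced $\sigma$-Gröbner basis of $I$ is a $Z$-separating $\sigma$-Gröbner basis of $I$. (b) Let $\{\frac1{c_1}f_1,\dots,\frac1{c_s}f_s,g_1,\dots,g_t\}$ be a $Z$-separating $\sigma$-Gröbner basis of $I$, and for $i=1,\dots,s$ let $h_i=\mathrm{NF}_{\hat\sigma,I\cap\widehat P}(\mathrm{tail}_{z_i}(f_i))$. Then the reduced $\sigma$-Gröbner basis of $I$ is $\{z_1-h_1,\dots,z_s-h_s,g_1,\dots,g_t\}$.
   Context: $K$ is a field, $P=K[x_1,\dots,x_n]$, $X=\{x_1,\dots,x_n\}$, $\mathfrak{M}=\langle x_1,\dots,x_n\rangle$, $\widehat P=K[X\setminus Z]$, $\hat\sigma$ the restriction of $\sigma$ to $\widehat P$, and $\mathrm{NF}_{\hat\sigma,J}(h)$ the normal form of $h$ modulo an ideal $J$ of $\widehat P$ with respect to $\hat\sigma$. For $f\in P$, $\mathrm{indets}(f)$ is the set of indeterminates dividing some term in the support of $f$. For $f\in\mathfrak{M}$ with nonzero degree-one part $\mathrm{Lin}_{\mathfrak{M}}(f)$, $z\in\mathrm{indets}(\mathrm{Lin}_{\mathfrak M}(f))$, and $c\neq 0$ the coefficient of $z$ in $f$, set $\mathrm{tail}_z(f)=z-\frac1cf$; $f$ is $z$-separating if $z\notin\mathrm{indets}(\mathrm{tail}_z(f))$.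 A tuple $(f_1,\dots,f_s)$ of nonzero elements of $\mathfrak M$ is coherently $Z$-separating if each $f_i$ is $z_i$-separating and $z_i\notin\mathrm{indets}(f_j)$ for $j\ne i$. A term ordering $\sigma$ is a $Z$-separating term ordering for $I$ if there are $f_1,\dots,f_s\in I\setminus\{0\}$ with $z_i=\mathrm{LT}_\sigma(f_i)$ and $(f_1,\dots,f_s)$ coherently $Z$-separating. For such $\sigma$, a $Z$-separating $\sigma$-Gröbner basis of $I$ is a $\sigma$-Gröbner basis of the form $\{\frac1{c_1}f_1,\dots,\frac1{c_s}f_s,g_1,\dots,g_t\}$ with $(f_1,\dots,f_s)$ coherently $Z$-separating, $c_i=\mathrm{LC}_\sigma(f_i)$, $z_i=\mathrm{LT}_\sigma(f_i)$, and $\{g_1,\dots,g_t\}$ the reduced $\hat\sigma$-Gröbner basis of $I\cap\widehat P$. *)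

theory Defs
  imports "HOL-Library.Poly_Mapping"
begin

text \<open>Polynomial ring P = K[X]: indeterminates are the elements of a finite type 'x
  (so X = UNIV, n = CARD('x)); terms are finitely supported maps 'x to nat (exponent vectors);
  polynomials are finitely supported maps from terms to coefficients in the field K.\<close>

type_synonym 'x mon = "'x \<Rightarrow>\<^sub>0 nat"
type_synonym ('x, 'a) mpoly = "'x mon \<Rightarrow>\<^sub>0 'a"

definition var :: "'x \<Rightarrow> ('x, 'a::{zero,one}) mpoly" where
  "var z = Poly_Mapping.single (Poly_Mapping.single z 1) 1"

definition const :: "'a::zero \<Rightarrow> ('x, 'a) mpoly" where
  "const c = Poly_Mapping.single 0 c"

definition mdvd :: "'x mon \<Rightarrow> 'x mon \<Rightarrow> bool" where
  "mdvd s t \<longleftrightarrow> (\<exists>u. t = s + u)"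

definition indets :: "('x, 'a::zero) mpoly \<Rightarrow> 'x set" where
  "indets f = {x. \<exists>t \<in> Poly_Mapping.keys f. x \<in> Poly_Mapping.keys t}"

definition Phat :: "'x set \<Rightarrow> ('x, 'a::zero) mpoly set" where
  "Phat Z = {f. indets f \<inter> Z = {}}"

text \<open>The maximal ideal M = <x_1,...,x_n>: polynomials with zero constant term.\<close>
definition Mideal :: "('x, 'a::zero) mpoly set" where
  "Mideal = {f. Poly_Mapping.lookup f 0 = 0}"

definition is_ideal :: "('x, 'a::comm_ring_1) mpoly set \<Rightarrow> bool" where
  "is_ideal I \<longleftrightarrow> 0 \<in> I \<and> (\<forall>f\<in>I. \<forall>g\<in>I. f + g \<in> I) \<and> (\<forall>f\<in>I. \<forall>p. p * f \<in> I)"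

text \<open>Term orderings (ord s t means s \<le>_sigma t).\<close>
definition term_order :: "('x mon \<Rightarrow> 'x mon \<Rightarrow> bool) \<Rightarrow> bool" where
  "term_order ord \<longleftrightarrow>
     (\<forall>s. ord s s) \<and> (\<forall>s t u. ord s t \<longrightarrow> ord t u \<longrightarrow> ord s u) \<and>
     (\<forall>s t. ord s t \<longrightarrow> ord t s \<longrightarrow> s = t) \<and> (\<forall>s t. ord s t \<or> ord t s) \<and>
     (\<forall>t. ord 0 t) \<and> (\<forall>s t u. ord s t \<longrightarrow> ord (s + u) (t + u))"

definition LT :: "('x mon \<Rightarrow> 'x mon \<Rightarrow> bool) \<Rightarrow> ('x, 'a::zero) mpoly \<Rightarrow> 'x mon" where
  "LT ord f = (THE t. t \<in> Poly_Mapping.keys f \<and> (\<forall>s\<in>Poly_Mapping.keys f. ord s t))"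

definition LC :: "('x mon \<Rightarrow> 'x mon \<Rightarrow> bool) \<Rightarrow> ('x, 'a::zero) mpoly \<Rightarrow> 'a" where
  "LC ord f = Poly_Mapping.lookup f (LT ord f)"

text \<open>Groebner bases (of a set J of polynomials, e.g. an ideal of P or of Phat).\<close>
definition is_GB :: "('x mon \<Rightarrow> 'x mon \<Rightarrow> bool) \<Rightarrow> ('x, 'a::zero) mpoly set
    \<Rightarrow> ('x, 'a) mpoly set \<Rightarrow> bool" where
  "is_GB ord J G \<longleftrightarrow> finite G \<and> G \<subseteq> J \<and> 0 \<notin> G \<and>
     (\<forall>f\<in>J. f \<noteq> 0 \<longrightarrow> (\<exists>g\<in>G. mdvd (LT ord g) (LT ord f)))"

definition is_reduced_GB :: "('x mon \<Rightarrow> 'x mon \<Rightarrow> bool) \<Rightarrow> ('x, 'a::{zero,one}) mpoly set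
    \<Rightarrow> ('x, 'a) mpoly set \<Rightarrow> bool" where
  "is_reduced_GB ord J G \<longleftrightarrow> is_GB ord J G \<and> (\<forall>g\<in>G. LC ord g = 1) \<and>
     (\<forall>g\<in>G. \<forall>g'\<in>G. g' \<noteq> g \<longrightarrow> (\<forall>t\<in>Poly_Mapping.keys g. \<not> mdvd (LT ord g') t))"

definition NF :: "('x mon \<Rightarrow> 'x mon \<Rightarrow> bool) \<Rightarrow> ('x, 'a::ab_group_add) mpoly set
    \<Rightarrow> ('x, 'a) mpoly \<Rightarrow> ('x, 'a) mpoly" where
  "NF ord J h = (THE r. h - r \<in> J \<and>
      (\<forall>t\<in>Poly_Mapping.keys r. \<forall>f\<in>J. f \<noteq> 0 \<longrightarrow> \<not> mdvd (LT ord f) t))"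

definition tail :: "'x \<Rightarrow> ('x, 'a::field) mpoly \<Rightarrow> ('x, 'a) mpoly" where
  "tail z f = var z - const (1 / Poly_Mapping.lookup f (Poly_Mapping.single z 1)) * f"

definition z_separating :: "'x \<Rightarrow> ('x, 'a::field) mpoly \<Rightarrow> bool" where
  "z_separating z f \<longleftrightarrow> f \<in> Mideal \<and> Poly_Mapping.lookup f (Poly_Mapping.single z 1) \<noteq> 0 \<and>
      z \<notin> indets (tail z f)"

text \<open>(f_1,...,f_s) coherently Z-separating, Z = {z_1,...,z_s} (indices 0..s-1).\<close>
definition coh_Z_separating :: "nat \<Rightarrow> (nat \<Rightarrow> 'x) \<Rightarrow> (nat \<Rightarrow> ('x, 'a::field) mpoly) \<Rightarrow> bool" where
  "coh_Z_separating s z f \<longleftrightarrow>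
     (\<forall>i<s. f i \<noteq> 0 \<and> f i \<in> Mideal \<and> z_separating (z i) (f i)) \<and>
     (\<forall>i<s. \<forall>j<s. j \<noteq> i \<longrightarrow> z i \<notin> indets (f j))"

definition Z_separating_order :: "('x mon \<Rightarrow> 'x mon \<Rightarrow> bool) \<Rightarrow> ('x, 'a::field) mpoly set
    \<Rightarrow> nat \<Rightarrow> (nat \<Rightarrow> 'x) \<Rightarrow> bool" where
  "Z_separating_order ord I s z \<longleftrightarrow> term_order ord \<and>
     (\<exists>f. (\<forall>i<s. f i \<in> I \<and> f i \<noteq> 0 \<and> LT ord (f i) = Poly_Mapping.single (z i) 1) \<and>
          coh_Z_separating s z f)"

text \<open>Since sigma-hat is the
  restriction of sigma to Phat, leading terms w.r.t. sigma-hat of elements of Phat are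
  their leading terms w.r.t. sigma.\<close>
definition Z_sep_GB_data :: "('x mon \<Rightarrow> 'x mon \<Rightarrow> bool) \<Rightarrow> ('x, 'a::field) mpoly set
    \<Rightarrow> nat \<Rightarrow> (nat \<Rightarrow> 'x) \<Rightarrow> (nat \<Rightarrow> ('x, 'a) mpoly) \<Rightarrow> ('x, 'a) mpoly set \<Rightarrow> bool" where
  "Z_sep_GB_data ord I s z f Gh \<longleftrightarrow>
     is_GB ord I ((\<lambda>i. const (1 / LC ord (f i)) * f i) ` {..<s} \<union> Gh) \<and>
     coh_Z_separating s z f \<and>
     (\<forall>i<s. LT ord (f i) = Poly_Mapping.single (z i) 1) \<and>
     is_reduced_GB ord (I \<inter> Phat (z ` {..<s})) Gh"

definition is_Z_sep_GB :: "('x mon \<Rightarrow> 'x mon \<Rightarrow> bool) \<Rightarrow> ('x, 'a::field) mpoly set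
    \<Rightarrow> nat \<Rightarrow> (nat \<Rightarrow> 'x) \<Rightarrow> ('x, 'a) mpoly set \<Rightarrow> bool" where
  "is_Z_sep_GB ord I s z G \<longleftrightarrow>
     (\<exists>f Gh. Z_sep_GB_data ord I s z f Gh \<and>
        G = (\<lambda>i. const (1 / LC ord (f i)) * f i) ` {..<s} \<union> Gh)"

end

theory Submission
  imports Defs
begin

lemma nat_seq_incsub:
  fixes a :: "nat \<Rightarrow> nat"
  shows "\<exists>\<psi>::nat\<Rightarrow>nat. strict_mono \<psi> \<and> (\<forall>m n. m \<le> n \<longrightarrow> a (\<psi> m) \<le> a (\<psi> n))"
proof -
  define sel where "sel k = (SOME j. k \<le> j \<and> (\<forall>i\<ge>k. a j \<le> a i))" for k
  have sel: "k \<le> sel k \<and> (\<forall>i\<ge>k. a (sel k) \<le> a i)" for k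
  proof -
    obtain x where "k \<le> x \<and> (\<forall>y. k \<le> y \<longrightarrow> a x \<le> a y)"
      using ex_has_least_nat[of "\<lambda>j. k \<le> j" k a] by auto
    then show ?thesis unfolding sel_def by (rule someI)
  qed
  define \<psi> where "\<psi> n = rec_nat (sel 0) (\<lambda>_ p. sel (Suc p)) n" for n
  have [simp]: "\<psi> 0 = sel 0" "\<psi> (Suc n) = sel (Suc (\<psi> n))" for n by (simp_all add: \<psi>_def)
  have step: "\<psi> n < \<psi> (Suc n)" for n using sel[of "Suc (\<psi> n)"] by simp
  have base: "\<exists>k. \<psi> n = sel k \<and> k \<le> \<psi> n" for n
  proof (cases n)
    case 0 then show ?thesis using sel[of 0] by (intro exI[of _ 0]) simp
  next
    case (Suc m) then show ?thesis using sel[of "Suc (\<psi> m)"] by (intro exI[of _ "Suc (\<psi> m)"]) simp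
  qed
  have stepa: "a (\<psi> n) \<le> a (\<psi> (Suc n))" for n
  proof -
    obtain k where "\<psi> n = sel k" "k \<le> \<psi> n" using base by blast
    moreover have "\<psi> n \<le> \<psi> (Suc n)" using step[of n] by simp
    ultimately show ?thesis using sel[of k] by auto
  qed
  have "strict_mono \<psi>" using step by (simp add: strict_mono_Suc_iff)
  moreover have "\<forall>m n. m \<le> n \<longrightarrow> a (\<psi> m) \<le> a (\<psi> n)"
  proof (intro allI impI)
    fix m n :: nat assume "m \<le> n"
    then show "a (\<psi> m) \<le> a (\<psi> n)" using lift_Suc_mono_le[of "\<lambda>n. a (\<psi> n)", OF stepa] by blast
  qed
  ultimately show ?thesis by blast
qed

lemma dickson_sub:
  fixes V :: "'x set" and F :: "nat \<Rightarrow> ('x \<Rightarrow>\<^sub>0 nat)"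
  assumes "finite V"
  shows "\<exists>\<phi>::nat\<Rightarrow>nat. strict_mono \<phi> \<and> (\<forall>x\<in>V. \<forall>m n. m \<le> n \<longrightarrow>
            Poly_Mapping.lookup (F (\<phi> m)) x \<le> Poly_Mapping.lookup (F (\<phi> n)) x)"
  using assms
proof (induction V arbitrary: F rule: finite_induct)
  case empty show ?case by (rule exI[where x="\<lambda>n. n"]) (simp add: strict_mono_def)
next
  case (insert y V)
  obtain \<phi> :: "nat \<Rightarrow> nat" where \<phi>: "strict_mono \<phi>" "\<forall>x\<in>V. \<forall>m n. m \<le> n \<longrightarrow>
            Poly_Mapping.lookup (F (\<phi> m)) x \<le> Poly_Mapping.lookup (F (\<phi> n)) x" using insert.IH by blast
  obtain \<psi> :: "nat \<Rightarrow> nat" where \<psi>: "strict_mono \<psi>" "\<forall>m n. m \<le> n \<longrightarrow> Poly_Mapping.lookup (F (\<phi> (\<psi> m))) y \<le> Poly_Mapping.lookup (F (\<phi> (\<psi> n))) y"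
    using nat_seq_incsub[of "\<lambda>n. Poly_Mapping.lookup (F (\<phi> n)) y"] by blast
  have "strict_mono (\<phi> \<circ> \<psi>)" using \<phi>(1) \<psi>(1) by (simp add: strict_mono_def)
  moreover have "\<forall>x\<in>insert y V. \<forall>m n. m \<le> n \<longrightarrow>
            Poly_Mapping.lookup (F ((\<phi> \<circ> \<psi>) m)) x \<le> Poly_Mapping.lookup (F ((\<phi> \<circ> \<psi>) n)) x"
  proof (intro ballI allI impI)
    fix x m n assume x: "x \<in> insert y V" and mn: "(m::nat) \<le> n"
    show "Poly_Mapping.lookup (F ((\<phi> \<circ> \<psi>) m)) x \<le> Poly_Mapping.lookup (F ((\<phi> \<circ> \<psi>) n)) x"
    proof (cases "x = y")
      case True then show ?thesis using \<psi>(2) mn by simp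
    next
      case False
      then have "x \<in> V" using x by simp
      moreover have "\<psi> m \<le> \<psi> n" using \<psi>(1) mn by (simp add: strict_mono_less_eq)
      ultimately show ?thesis using \<phi>(2) by simp
    qed
  qed
  ultimately show ?case by blast
qed

lemma dickson:
  fixes F :: "nat \<Rightarrow> ('x::finite) mon"
  shows "\<exists>i j. i < j \<and> mdvd (F i) (F j)"
proof -
  obtain \<phi> :: "nat \<Rightarrow> nat" where \<phi>: "strict_mono \<phi>" "\<forall>x. \<forall>m n. m \<le> n \<longrightarrow>
            Poly_Mapping.lookup (F (\<phi> m)) x \<le> Poly_Mapping.lookup (F (\<phi> n)) x" using dickson_sub[of UNIV F] by auto
  have le: "\<And>x. Poly_Mapping.lookup (F (\<phi> 0)) x \<le> Poly_Mapping.lookup (F (\<phi> 1)) x" using \<phi>(2) by auto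
  have "F (\<phi> 1) = F (\<phi> 0) + (F (\<phi> 1) - F (\<phi> 0))"
    by (rule poly_mapping_eqI) (metis le le_add_diff_inverse lookup_add lookup_minus)
  then show ?thesis using \<phi>(1) unfolding mdvd_def strict_mono_def by (intro exI[of _ "\<phi> 0"] exI[of _ "\<phi> 1"]) auto
qed

lemma mdvd_ord:
  assumes "term_order ord" "mdvd s t" shows "ord s t"
proof -
  obtain u where t: "t = s + u" using assms(2) unfolding mdvd_def by blast
  have "ord 0 u" "\<And>a b c. ord a b \<Longrightarrow> ord (a + c) (b + c)" using assms(1) unfolding term_order_def by blast+
  then have "ord (0 + s) (u + s)" by blast
  then show ?thesis using t by (simp add: add.commute)
qed

lemma term_order_wf:
  fixes ord :: "('x::finite) mon \<Rightarrow> _"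
  assumes to: "term_order ord"
  shows "wf {(s, t). ord s t \<and> s \<noteq> t}"
proof (rule ccontr)
  assume "\<not> ?thesis"
  then obtain F where F: "\<And>i. ord (F (Suc i)) (F i) \<and> F (Suc i) \<noteq> F i"
    unfolding wf_iff_no_infinite_down_chain by auto
  have trans: "\<And>a b c. ord a b \<Longrightarrow> ord b c \<Longrightarrow> ord a c"
    and anti: "\<And>a b. ord a b \<Longrightarrow> ord b a \<Longrightarrow> a = b" and refl: "\<And>a. ord a a"
    using to unfolding term_order_def by blast+
  have le: "ord (F (i + k)) (F i)" for i k
  proof (induction k)
    case 0 then show ?case using refl by simp
  next
    case (Suc k) then show ?case using F[of "i+k"] trans by auto
  qed
  have lt: "i < j \<Longrightarrow> ord (F j) (F i) \<and> F j \<noteq> F i" for i j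
  proof -
    assume "i < j"
    then obtain k where j: "j = Suc (i + k)" using less_iff_Suc_add by blast
    have "ord (F j) (F (Suc i))" using le[of "Suc i" k] unfolding j by simp
    moreover have "F j \<noteq> F i"
    proof
      assume "F j = F i"
      then have "ord (F i) (F (Suc i))" using \<open>ord (F j) (F (Suc i))\<close> by simp
      then have "F (Suc i) = F i" by (rule anti[OF conjunct1[OF F[of i]]])
      then show False using F[of i] by simp
    qed
    ultimately show ?thesis using trans[OF _ conjunct1[OF F[of i]]] by blast
  qed
  obtain i j where "i < j" "mdvd (F i) (F j)" using dickson by blast
  then show False using lt[of i j] mdvd_ord[OF to, of "F i" "F j"] anti[of "F i" "F j"] by simp
qed



lemma finite_max_ord:
  assumes to: "term_order ord" and "finite A" "A \<noteq> {}"
  shows "\<exists>t\<in>A. \<forall>s\<in>A. ord s t"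
  using assms(2,3)
proof (induction A rule: finite_ne_induct)
  case (singleton x) then show ?case using to unfolding term_order_def by simp
next
  case (insert x F)
  then obtain t where t: "t \<in> F" "\<forall>s\<in>F. ord s t" by blast
  have tot: "ord x t \<or> ord t x" and tr: "\<And>a b c. ord a b \<Longrightarrow> ord b c \<Longrightarrow> ord a c"
    and rf: "ord x x"
    using to unfolding term_order_def by blast+
  show ?case
  proof (cases "ord x t")
    case True then show ?thesis using t by auto
  next
    case False then have "ord t x" using tot by simp
    then have "\<forall>s\<in>insert x F. ord s x" using t tr rf by blast
    then show ?thesis by blast
  qed
qed

lemma LT_prop:
  fixes f :: "('x, 'a::zero) mpoly"
  assumes to: "term_order ord" and f: "f \<noteq> 0"
  shows "LT ord f \<in> Poly_Mapping.keys f \<and> (\<forall>s\<in>Poly_Mapping.keys f. ord s (LT ord f))"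
proof -
  have ne: "Poly_Mapping.keys f \<noteq> {}" using f by simp
  obtain t where t: "t \<in> Poly_Mapping.keys f" "\<forall>s\<in>Poly_Mapping.keys f. ord s t"
    using finite_max_ord[OF to finite_keys ne] by blast
  have anti: "\<And>a b. ord a b \<Longrightarrow> ord b a \<Longrightarrow> a = b" using to unfolding term_order_def by blast
  have "LT ord f = t" unfolding LT_def
    by (rule the_equality) (use t anti in blast)+
  then show ?thesis using t by simp
qed

lemma LT_eqI:
  fixes f :: "('x, 'a::zero) mpoly"
  assumes to: "term_order ord" and "t \<in> Poly_Mapping.keys f" "\<forall>s\<in>Poly_Mapping.keys f. ord s t"
  shows "LT ord f = t"
proof -
  have f: "f \<noteq> 0" using assms(2) by auto
  have anti: "\<And>a b. ord a b \<Longrightarrow> ord b a \<Longrightarrow> a = b" using to unfolding term_order_def by blast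
  show ?thesis using LT_prop[OF to f] assms(2,3) anti by blast
qed

lemma lookup_monom_mult:
  fixes g :: "('x, 'a::comm_ring_1) mpoly"
  shows "Poly_Mapping.lookup (Poly_Mapping.single u c * g) (u + k) = c * Poly_Mapping.lookup g k"
proof -
  have "Poly_Mapping.lookup (Poly_Mapping.single u c * g) (u + k) =
    (\<Sum>l. Poly_Mapping.lookup (Poly_Mapping.single u c) l *
        (\<Sum>q. Poly_Mapping.lookup g q when u + k = l + q))"
    by (rule lookup_mult)
  also have "\<dots> = (\<Sum>l. (c * (\<Sum>q. Poly_Mapping.lookup g q when u + k = l + q)) when l = u)"
    by (rule Sum_any.cong) (simp add: lookup_single when_def)
  also have "\<dots> = c * (\<Sum>q. Poly_Mapping.lookup g q when u + k = u + q)"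
    by simp
  also have "(\<Sum>q. Poly_Mapping.lookup g q when u + k = u + q) = (\<Sum>q. Poly_Mapping.lookup g q when q = k)"
    by (rule Sum_any.cong) (auto simp: when_def)
  also have "\<dots> = Poly_Mapping.lookup g k" by simp
  finally show ?thesis .
qed

lemma keys_monom_mult:
  fixes g :: "('x, 'a::comm_ring_1) mpoly"
  shows "Poly_Mapping.keys (Poly_Mapping.single u c * g) \<subseteq> (\<lambda>k. u + k) ` Poly_Mapping.keys g"
proof
  fix t assume "t \<in> Poly_Mapping.keys (Poly_Mapping.single u c * g)"
  then obtain a b where "t = a + b" "a \<in> Poly_Mapping.keys (Poly_Mapping.single u c)" "b \<in> Poly_Mapping.keys g"
    using keys_mult by blast
  moreover have "Poly_Mapping.keys (Poly_Mapping.single u c) \<subseteq> {u}" by simp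
  ultimately show "t \<in> (\<lambda>k. u + k) ` Poly_Mapping.keys g" by auto
qed

lemma lookup_const_mult:
  fixes g :: "('x, 'a::comm_ring_1) mpoly"
  shows "Poly_Mapping.lookup (const c * g) k = c * Poly_Mapping.lookup g k"
  using lookup_monom_mult[of 0 c g k] unfolding const_def by simp

lemma keys_const_mult:
  fixes g :: "('x, 'a::field) mpoly"
  assumes "c \<noteq> 0"
  shows "Poly_Mapping.keys (const c * g) = Poly_Mapping.keys g"
  using assms by (auto simp: in_keys_iff lookup_const_mult)

lemma keys_mon_add: "Poly_Mapping.keys ((s::'x mon) + u) = Poly_Mapping.keys s \<union> Poly_Mapping.keys u"
  by (auto simp: in_keys_iff lookup_add)

lemma mdvd_refl: "mdvd t t"
  unfolding mdvd_def by (rule exI[of _ 0]) simp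

lemma mdvd_trans: assumes "mdvd a b" "mdvd b c" shows "mdvd a c"
proof -
  obtain u where u: "b = a + u" using assms(1) unfolding mdvd_def by blast
  obtain v where v: "c = b + v" using assms(2) unfolding mdvd_def by blast
  have "c = a + (u + v)" using u v by (simp add: add.assoc)
  then show ?thesis unfolding mdvd_def by blast
qed

lemma mdvd_keys: assumes "mdvd s t" shows "Poly_Mapping.keys s \<subseteq> Poly_Mapping.keys t"
proof -
  obtain u where u: "t = s + u" using assms unfolding mdvd_def by blast
  have "Poly_Mapping.keys t = Poly_Mapping.keys s \<union> Poly_Mapping.keys u" unfolding u by (rule keys_mon_add)
  then show ?thesis by blast
qed

lemma mdvd_single_iff: "mdvd (Poly_Mapping.single z 1) (t::'x mon) \<longleftrightarrow> z \<in> Poly_Mapping.keys t"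
proof
  assume "mdvd (Poly_Mapping.single z 1) t"
  then show "z \<in> Poly_Mapping.keys t" using mdvd_keys by fastforce
next
  assume z: "z \<in> Poly_Mapping.keys t"
  have "t = Poly_Mapping.single z 1 + (t - Poly_Mapping.single z 1)"
  proof (rule poly_mapping_eqI)
    fix k show "Poly_Mapping.lookup t k = Poly_Mapping.lookup (Poly_Mapping.single z 1 + (t - Poly_Mapping.single z 1)) k"
      using z by (cases "k = z") (auto simp: lookup_add lookup_minus lookup_single in_keys_iff)
  qed
  then show "mdvd (Poly_Mapping.single z 1) t" unfolding mdvd_def by blast
qed

lemma mdvd_to_single:
  assumes "mdvd t (Poly_Mapping.single z 1 :: 'x mon)"
  shows "t = 0 \<or> t = Poly_Mapping.single z 1"
proof -
  obtain u where u: "Poly_Mapping.single z 1 = t + u" using assms unfolding mdvd_def by blast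
  have lk: "Poly_Mapping.lookup t k + Poly_Mapping.lookup u k = (if k = z then 1 else 0)" for k
    using arg_cong[OF u, of "\<lambda>p. Poly_Mapping.lookup p k"] by (auto simp add: lookup_add lookup_single when_def)
  have o: "k \<noteq> z \<Longrightarrow> Poly_Mapping.lookup t k = 0" for k using lk[of k] by simp
  show ?thesis
  proof (cases "Poly_Mapping.lookup t z = 0")
    case True
    then have "t = 0" by (intro poly_mapping_eqI) (metis o lookup_zero)
    then show ?thesis by simp
  next
    case False
    then have "Poly_Mapping.lookup t z = 1" using lk[of z] by simp
    then have "t = Poly_Mapping.single z 1"
      by (intro poly_mapping_eqI) (metis o lookup_single_eq lookup_single_not_eq)
    then show ?thesis by simp
  qed
qed

lemma Phat_iff: "f \<in> Phat Z \<longleftrightarrow> (\<forall>t\<in>Poly_Mapping.keys f. Poly_Mapping.keys t \<inter> Z = {})"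
  unfolding Phat_def indets_def by blast

lemma Phat_keys_sub: "g \<in> Phat Z \<Longrightarrow> Poly_Mapping.keys f \<subseteq> Poly_Mapping.keys g \<Longrightarrow> f \<in> Phat Z"
  unfolding Phat_iff by blast

lemma Phat_add:
  fixes f :: "('x, 'a::monoid_add) mpoly"
  assumes "f \<in> Phat Z" "g \<in> Phat Z" shows "f + g \<in> Phat Z"
proof -
  have "Poly_Mapping.keys (f + g) \<subseteq> Poly_Mapping.keys f \<union> Poly_Mapping.keys g" by (rule keys_add)
  then show ?thesis using assms unfolding Phat_iff by blast
qed

lemma Phat_diff:
  fixes f :: "('x, 'a::ab_group_add) mpoly"
  assumes "f \<in> Phat Z" "g \<in> Phat Z" shows "f - g \<in> Phat Z"
proof -
  have "Poly_Mapping.keys (f - g) \<subseteq> Poly_Mapping.keys f \<union> Poly_Mapping.keys g" by (rule keys_diff)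
  then show ?thesis using assms unfolding Phat_iff by blast
qed

lemma Phat_zero: "0 \<in> Phat Z"
  unfolding Phat_iff by simp

lemma Phat_monom_mult:
  fixes g :: "('x, 'a::comm_ring_1) mpoly"
  assumes "g \<in> Phat Z" "Poly_Mapping.keys u \<inter> Z = {}"
  shows "Poly_Mapping.single u c * g \<in> Phat Z"
  unfolding Phat_iff
proof
  fix t assume "t \<in> Poly_Mapping.keys (Poly_Mapping.single u c * g)"
  then have "t \<in> (\<lambda>k. u + k) ` Poly_Mapping.keys g" using keys_monom_mult[of u c g] by blast
  then obtain b where b: "b \<in> Poly_Mapping.keys g" "t = u + b" by blast
  have "Poly_Mapping.keys t = Poly_Mapping.keys u \<union> Poly_Mapping.keys b" unfolding b(2) by (rule keys_mon_add)
  moreover have "Poly_Mapping.keys b \<inter> Z = {}" using assms(1) b(1) unfolding Phat_iff by blast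
  ultimately show "Poly_Mapping.keys t \<inter> Z = {}" using assms(2) by blast
qed

lemma ideal_parts:
  fixes I :: "('x, 'a::comm_ring_1) mpoly set"
  assumes "is_ideal I"
  shows "0 \<in> I" "\<And>f g. f \<in> I \<Longrightarrow> g \<in> I \<Longrightarrow> f + g \<in> I" "\<And>f p. f \<in> I \<Longrightarrow> p * f \<in> I"
  using assms unfolding is_ideal_def by auto

lemma ideal_diff:
  fixes I :: "('x, 'a::comm_ring_1) mpoly set"
  assumes "is_ideal I" "f \<in> I" "g \<in> I" shows "f - g \<in> I"
proof -
  have "(-1) * g \<in> I" using ideal_parts(3)[OF assms(1) assms(3)] .
  then have "-g \<in> I" by simp
  then have "f + (-g) \<in> I" by (rule ideal_parts(2)[OF assms(1) assms(2)])
  then show ?thesis by simp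
qed

lemma LT_nonzero:
  fixes f :: "('x, 'a::zero) mpoly"
  assumes to: "term_order ord" and "f \<in> Mideal" "f \<noteq> 0"
  shows "LT ord f \<noteq> 0"
proof
  assume h: "LT ord f = 0"
  have anti: "\<And>a b. ord a b \<Longrightarrow> ord b a \<Longrightarrow> a = b" and z: "\<And>t. ord 0 t"
    using to unfolding term_order_def by blast+
  have k0: "k = 0" if "k \<in> Poly_Mapping.keys f" for k
  proof -
    have "ord k 0" using LT_prop[OF to assms(3)] h that by simp
    then show ?thesis using anti z by simp
  qed
  have "0 \<notin> Poly_Mapping.keys f" using assms(2) unfolding Mideal_def by (simp add: in_keys_iff)
  then have "Poly_Mapping.keys f = {}" using k0 by blast
  then show False using assms(3) by simp
qed



lemma term_order_parts:
  assumes "term_order ord"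
  shows "\<And>s. ord s s" "\<And>a b c. ord a b \<Longrightarrow> ord b c \<Longrightarrow> ord a c"
    "\<And>a b. ord a b \<Longrightarrow> ord b a \<Longrightarrow> a = b" "\<And>a b. ord a b \<or> ord b a"
    "\<And>t. ord 0 t" "\<And>a b c. ord a b \<Longrightarrow> ord (a + c) (b + c)"
  using assms unfolding term_order_def by blast+

lemma NF_exists:
  fixes I :: "('x::finite, 'a::field) mpoly set" and p :: "('x, 'a) mpoly"
  assumes to: "term_order ord" and id: "is_ideal I" and p0: "p \<in> Phat Z"
  shows "\<exists>r. p - r \<in> I \<inter> Phat Z \<and>
    (\<forall>t\<in>Poly_Mapping.keys r. \<forall>f\<in>I \<inter> Phat Z. f \<noteq> 0 \<longrightarrow> \<not> mdvd (LT ord f) t)"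
proof -
  define J where "J = I \<inter> Phat Z"
  define std where "std t \<longleftrightarrow> (\<forall>f\<in>J. f \<noteq> 0 \<longrightarrow> \<not> mdvd (LT ord f) t)" for t
  have J0: "0 \<in> J" using ideal_parts(1)[OF id] Phat_zero unfolding J_def by blast
  have Jadd: "a + b \<in> J" if "a \<in> J" "b \<in> J" for a b
    using that ideal_parts(2)[OF id, of a b] Phat_add[of a Z b] unfolding J_def by blast
  have Jmon: "Poly_Mapping.single u e * g \<in> J" if "g \<in> J" "Poly_Mapping.keys u \<inter> Z = {}" for g u e
    using that ideal_parts(3)[OF id, of g "Poly_Mapping.single u e"] Phat_monom_mult[of g Z u e]
    unfolding J_def by blast
  note top = term_order_parts[OF to]
  define R where "R = {(s, t). ord s t \<and> s \<noteq> t}"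
  have wfR: "wf R" unfolding R_def by (rule term_order_wf[OF to])
  have main: "\<forall>p::('x, 'a) mpoly. p \<in> Phat Z \<longrightarrow> (\<forall>k\<in>Poly_Mapping.keys p. ord k t) \<longrightarrow>
     (\<exists>r. p - r \<in> J \<and> (\<forall>k\<in>Poly_Mapping.keys r. std k))" for t
    using wfR
  proof (induction t rule: wf_induct_rule)
    case (less t)
    have below: "\<exists>r. q - r \<in> J \<and> (\<forall>k\<in>Poly_Mapping.keys r. std k)"
      if q: "(q::('x, 'a) mpoly) \<in> Phat Z" "\<forall>k\<in>Poly_Mapping.keys q. ord k t \<and> k \<noteq> t" for q
    proof (cases "q = 0")
      case True then show ?thesis using J0 by (intro exI[of _ 0]) simp
    next
      case False
      have lt: "LT ord q \<in> Poly_Mapping.keys q" "\<forall>s\<in>Poly_Mapping.keys q. ord s (LT ord q)"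
        using LT_prop[OF to False] by blast+
      then have "(LT ord q, t) \<in> R" using q(2) unfolding R_def by blast
      from less[OF this] have "q \<in> Phat Z \<longrightarrow> (\<forall>k\<in>Poly_Mapping.keys q. ord k (LT ord q)) \<longrightarrow>
        (\<exists>r. q - r \<in> J \<and> (\<forall>k\<in>Poly_Mapping.keys r. std k))" by blast
      then show ?thesis using q(1) lt(2) by blast
    qed
    show ?case
    proof (intro allI impI)
      fix p :: "('x, 'a) mpoly" assume p: "p \<in> Phat Z" and pk: "\<forall>k\<in>Poly_Mapping.keys p. ord k t"
      define c where "c = Poly_Mapping.lookup p t"
      define p' where "p' = p - Poly_Mapping.single t c"
      have lp': "Poly_Mapping.lookup p' k = (if k = t then 0 else Poly_Mapping.lookup p k)" for k
        unfolding p'_def c_def by (simp add: lookup_minus lookup_single when_def)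
      have kp': "Poly_Mapping.keys p' \<subseteq> Poly_Mapping.keys p"
        using lp' by (auto simp: in_keys_iff split: if_splits)
      have tp': "t \<notin> Poly_Mapping.keys p'" using lp' by (simp add: in_keys_iff)
      have p'Z: "p' \<in> Phat Z" using Phat_keys_sub[OF p kp'] .
      have p'b: "\<forall>k\<in>Poly_Mapping.keys p'. ord k t \<and> k \<noteq> t" using kp' tp' pk by blast
      show "\<exists>r. p - r \<in> J \<and> (\<forall>k\<in>Poly_Mapping.keys r. std k)"
      proof (cases "c = 0")
        case True
        then have "p' = p" unfolding p'_def by simp
        then show ?thesis using below[OF p'Z p'b] by simp
      next
        case cnz: False
        then have tk: "t \<in> Poly_Mapping.keys p" unfolding c_def by (simp add: in_keys_iff)
        then have tZ: "Poly_Mapping.keys t \<inter> Z = {}" using p unfolding Phat_iff by blast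
        show ?thesis
        proof (cases "std t")
          case True
          obtain r' where r': "p' - r' \<in> J" "\<forall>k\<in>Poly_Mapping.keys r'. std k"
            using below[OF p'Z p'b] by blast
          define r where "r = Poly_Mapping.single t c + r'"
          have e: "p - r = p' - r'" unfolding r_def p'_def by simp
          have s: "\<forall>k\<in>Poly_Mapping.keys r. std k"
          proof
            fix k assume "k \<in> Poly_Mapping.keys r"
            then have "k \<in> Poly_Mapping.keys (Poly_Mapping.single t c) \<union> Poly_Mapping.keys r'"
              unfolding r_def using keys_add[of "Poly_Mapping.single t c" r'] by blast
            then show "std k" using True r'(2) by (auto split: if_splits)
          qed
          show ?thesis using r'(1) e s by (intro exI[of _ r]) simp
        next
          case False
          then obtain g where g: "g \<in> J" "g \<noteq> 0" "mdvd (LT ord g) t" unfolding std_def by blast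
          then obtain u where u: "t = LT ord g + u" unfolding mdvd_def by blast
          have gl: "LT ord g \<in> Poly_Mapping.keys g" "\<forall>s\<in>Poly_Mapping.keys g. ord s (LT ord g)"
            using LT_prop[OF to g(2)] by blast+
          define d where "d = LC ord g"
          have dnz: "d \<noteq> 0" using gl(1) unfolding d_def LC_def by (simp add: in_keys_iff)
          define m where "m = Poly_Mapping.single u (c / d) * g"
          have "Poly_Mapping.keys t = Poly_Mapping.keys (LT ord g) \<union> Poly_Mapping.keys u"
            unfolding u by (rule keys_mon_add)
          then have uZ: "Poly_Mapping.keys u \<inter> Z = {}" using tZ by blast
          have mJ: "m \<in> J" unfolding m_def using Jmon[OF g(1) uZ] .
          define q where "q = p - m"
          have "m \<in> Phat Z" using mJ unfolding J_def by blast
          then have qZ: "q \<in> Phat Z" unfolding q_def using Phat_diff[OF p] by blast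
          have lqt: "Poly_Mapping.lookup q t = 0"
          proof -
            have "Poly_Mapping.lookup m (u + LT ord g) = (c/d) * Poly_Mapping.lookup g (LT ord g)"
              unfolding m_def by (rule lookup_monom_mult)
            moreover have "u + LT ord g = t" using u by (simp add: add.commute)
            ultimately have "Poly_Mapping.lookup m t = c" using dnz unfolding d_def LC_def by simp
            then show ?thesis unfolding q_def c_def by (simp add: lookup_minus)
          qed
          have qk: "\<forall>k\<in>Poly_Mapping.keys q. ord k t \<and> k \<noteq> t"
          proof
            fix k assume k: "k \<in> Poly_Mapping.keys q"
            then have kt: "k \<noteq> t" using lqt by (auto simp: in_keys_iff)
            have "k \<in> Poly_Mapping.keys p \<union> Poly_Mapping.keys m"
              using k keys_diff[of p m] unfolding q_def by blast
            then have "ord k t"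
            proof
              assume "k \<in> Poly_Mapping.keys p" then show ?thesis using pk by blast
            next
              assume "k \<in> Poly_Mapping.keys m"
              then have "k \<in> (\<lambda>k. u + k) ` Poly_Mapping.keys g"
                using keys_monom_mult[of u "c/d" g] unfolding m_def by blast
              then obtain b where b: "b \<in> Poly_Mapping.keys g" "k = u + b" by blast
              have "ord b (LT ord g)" using gl(2) b(1) by blast
              then have "ord (b + u) (LT ord g + u)" by (rule top(6))
              then show ?thesis using b(2) u by (simp add: add.commute)
            qed
            then show "ord k t \<and> k \<noteq> t" using kt by blast
          qed
          obtain r where r: "q - r \<in> J" "\<forall>k\<in>Poly_Mapping.keys r. std k" using below[OF qZ qk] by blast
          have e: "p - r = m + (q - r)" unfolding q_def by simp
          have "p - r \<in> J" unfolding e by (rule Jadd[OF mJ r(1)])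
          then show ?thesis using r(2) by blast
        qed
      qed
    qed
  qed
  have "\<exists>r. p - r \<in> J \<and> (\<forall>k\<in>Poly_Mapping.keys r. std k)"
  proof (cases "p = 0")
    case True then show ?thesis using J0 by (intro exI[of _ 0]) simp
  next
    case False
    then have "\<forall>k\<in>Poly_Mapping.keys p. ord k (LT ord p)" using LT_prop[OF to] by blast
    then show ?thesis using main[of "LT ord p"] p0 by blast
  qed
  then show ?thesis unfolding J_def std_def .
qed

lemma NF_char:
  fixes I :: "('x::finite, 'a::field) mpoly set" and p :: "('x, 'a) mpoly"
  assumes to: "term_order ord" and id: "is_ideal I" and p0: "p \<in> Phat Z"
  shows "p - NF ord (I \<inter> Phat Z) p \<in> I \<inter> Phat Z \<and>
    (\<forall>t\<in>Poly_Mapping.keys (NF ord (I \<inter> Phat Z) p). \<forall>f\<in>I \<inter> Phat Z. f \<noteq> 0 \<longrightarrow> \<not> mdvd (LT ord f) t)"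
proof -
  define P where "P r \<longleftrightarrow> p - r \<in> I \<inter> Phat Z \<and>
    (\<forall>t\<in>Poly_Mapping.keys r. \<forall>f\<in>I \<inter> Phat Z. f \<noteq> 0 \<longrightarrow> \<not> mdvd (LT ord f) t)" for r
  obtain r0 where r0: "P r0" using NF_exists[OF to id p0] unfolding P_def by blast
  have uniq: "r = r0" if r: "P r" for r
  proof (rule ccontr)
    assume ne: "r \<noteq> r0"
    define d where "d = r - r0"
    have dnz: "d \<noteq> 0" using ne unfolding d_def by simp
    have e: "d = (p - r0) - (p - r)" unfolding d_def by simp
    have "d \<in> I" unfolding e by (rule ideal_diff[OF id]) (use r r0 in \<open>auto simp: P_def\<close>)
    moreover have "d \<in> Phat Z" unfolding e by (rule Phat_diff) (use r r0 in \<open>auto simp: P_def\<close>)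
    ultimately have dJ: "d \<in> I \<inter> Phat Z" by blast
    have "LT ord d \<in> Poly_Mapping.keys d" using LT_prop[OF to dnz] by blast
    then have "LT ord d \<in> Poly_Mapping.keys r \<union> Poly_Mapping.keys r0"
      using keys_diff[of r r0] unfolding d_def by blast
    then show False using r r0 dJ dnz mdvd_refl[of "LT ord d"] unfolding P_def by blast
  qed
  have "P (THE r. P r)" by (rule theI[of P r0]) (use r0 uniq in blast)+
  then show ?thesis unfolding NF_def P_def .
qed



lemma reduced_parts:
  assumes "is_reduced_GB ord I G"
  shows "finite G" "G \<subseteq> I" "0 \<notin> G"
    "\<And>f. f \<in> I \<Longrightarrow> f \<noteq> 0 \<Longrightarrow> \<exists>g\<in>G. mdvd (LT ord g) (LT ord f)"
    "\<And>g. g \<in> G \<Longrightarrow> LC ord g = 1"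
    "\<And>g g' t. g \<in> G \<Longrightarrow> g' \<in> G \<Longrightarrow> g' \<noteq> g \<Longrightarrow> t \<in> Poly_Mapping.keys g \<Longrightarrow> \<not> mdvd (LT ord g') t"
  using assms unfolding is_reduced_GB_def is_GB_def by blast+

lemma reduced_same_LT:
  fixes I :: "('x, 'a::field) mpoly set"
  assumes to: "term_order ord" and G: "is_reduced_GB ord I G" and G': "is_reduced_GB ord I G'"
    and g: "g \<in> G"
  shows "\<exists>g'\<in>G'. LT ord g' = LT ord g"
proof -
  note A = reduced_parts[OF G] and B = reduced_parts[OF G']
  have gI: "g \<in> I" "g \<noteq> 0" using A(2,3) g by blast+
  obtain g' where g': "g' \<in> G'" "mdvd (LT ord g') (LT ord g)" using B(4)[OF gI] by blast
  have g'I: "g' \<in> I" "g' \<noteq> 0" using B(2,3) g'(1) by blast+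
  obtain g'' where g'': "g'' \<in> G" "mdvd (LT ord g'') (LT ord g')" using A(4)[OF g'I] by blast
  have d: "mdvd (LT ord g'') (LT ord g)" using mdvd_trans[OF g''(2) g'(2)] .
  have "g'' = g"
  proof (rule ccontr)
    assume "g'' \<noteq> g"
    moreover have "LT ord g \<in> Poly_Mapping.keys g" using LT_prop[OF to gI(2)] by blast
    ultimately show False using A(6)[OF g g''(1)] d by blast
  qed
  then have "ord (LT ord g) (LT ord g')" "ord (LT ord g') (LT ord g)"
    using mdvd_ord[OF to] g''(2) g'(2) by blast+
  then have "LT ord g' = LT ord g" using term_order_parts(3)[OF to] by blast
  then show ?thesis using g'(1) by blast
qed

lemma reduced_sub:
  fixes I :: "('x, 'a::field) mpoly set"
  assumes to: "term_order ord" and id: "is_ideal I"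
    and G: "is_reduced_GB ord I G" and G': "is_reduced_GB ord I G'"
  shows "G \<subseteq> G'"
proof
  fix g assume g: "g \<in> G"
  note A = reduced_parts[OF G] and B = reduced_parts[OF G']
  note top = term_order_parts[OF to]
  obtain g' where g': "g' \<in> G'" "LT ord g' = LT ord g" using reduced_same_LT[OF to G G' g] by blast
  have gI: "g \<in> I" "g \<noteq> 0" using A(2,3) g by blast+
  have g'I: "g' \<in> I" "g' \<noteq> 0" using B(2,3) g'(1) by blast+
  show "g \<in> G'"
  proof (cases "g = g'")
    case True then show ?thesis using g'(1) by simp
  next
    case False
    define d where "d = g - g'"
    have dnz: "d \<noteq> 0" using False unfolding d_def by simp
    have dI: "d \<in> I" unfolding d_def by (rule ideal_diff[OF id gI(1) g'I(1)])
    have lg: "LT ord g \<in> Poly_Mapping.keys g" "\<forall>s\<in>Poly_Mapping.keys g. ord s (LT ord g)"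
      using LT_prop[OF to gI(2)] by blast+
    have lg': "\<forall>s\<in>Poly_Mapping.keys g'. ord s (LT ord g)"
      using LT_prop[OF to g'I(2)] g'(2) by simp
    have "Poly_Mapping.lookup d (LT ord g) = LC ord g - LC ord g'"
      unfolding d_def LC_def g'(2) by (simp add: lookup_minus)
    then have d0: "Poly_Mapping.lookup d (LT ord g) = 0" using A(5)[OF g] B(5)[OF g'(1)] by simp
    have ld: "LT ord d \<in> Poly_Mapping.keys d" using LT_prop[OF to dnz] by blast
    have ldk: "LT ord d \<in> Poly_Mapping.keys g \<union> Poly_Mapping.keys g'"
      using ld keys_diff[of g g'] unfolding d_def by blast
    have ne: "LT ord d \<noteq> LT ord g" using ld d0 by (auto simp: in_keys_iff)
    have le: "ord (LT ord d) (LT ord g)" using ldk lg(2) lg' by blast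
    obtain h where h: "h \<in> G" "mdvd (LT ord h) (LT ord d)" using A(4)[OF dI dnz] by blast
    have hle: "ord (LT ord h) (LT ord d)" using mdvd_ord[OF to h(2)] .
    have hne: "LT ord h \<noteq> LT ord g"
    proof
      assume "LT ord h = LT ord g"
      then have "ord (LT ord g) (LT ord d)" using hle by simp
      then show False using le ne top(3) by blast
    qed
    have "h \<noteq> g" using hne by blast
    show ?thesis
    proof (cases "LT ord d \<in> Poly_Mapping.keys g")
      case True
      then show ?thesis using A(6)[OF g h(1) \<open>h \<noteq> g\<close> True] h(2) by blast
    next
      case False
      then have inG': "LT ord d \<in> Poly_Mapping.keys g'" using ldk by blast
      obtain h' where h': "h' \<in> G'" "LT ord h' = LT ord h" using reduced_same_LT[OF to G G' h(1)] by blast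
      have "h' \<noteq> g'" using h'(2) g'(2) hne by metis
      then show ?thesis using B(6)[OF g'(1) h'(1) _ inG'] h(2) h'(2) by simp
    qed
  qed
qed

lemma reduced_unique:
  fixes I :: "('x, 'a::field) mpoly set"
  assumes to: "term_order ord" and id: "is_ideal I"
    and G: "is_reduced_GB ord I G" and G': "is_reduced_GB ord I G'"
  shows "G = G'"
  using reduced_sub[OF to id G G'] reduced_sub[OF to id G' G] by blast



lemma keys_zm: "Poly_Mapping.keys (Poly_Mapping.single z (1::nat)) = {z}"
  by simp

lemma lookup_var: "Poly_Mapping.lookup (var z :: ('x, 'a::{zero,one}) mpoly) t =
   (if t = Poly_Mapping.single z 1 then 1 else 0)"
  unfolding var_def by (simp add: lookup_single when_def eq_commute)

lemma keys_var: "Poly_Mapping.keys (var z :: ('x, 'a::{zero_neq_one}) mpoly) = {Poly_Mapping.single z 1}"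
  unfolding var_def by simp

lemma LT_keys_eq: "Poly_Mapping.keys f = Poly_Mapping.keys g \<Longrightarrow> LT ord f = LT ord g"
  unfolding LT_def by simp

lemma const_one_mult: "const 1 * (g :: ('x, 'a::comm_ring_1) mpoly) = g"
  by (rule poly_mapping_eqI) (simp add: lookup_const_mult)

lemma part_a:
  fixes I :: "('x::finite, 'a::field) mpoly set"
  assumes id: "is_ideal I" and IM: "I \<subseteq> Mideal" and inj: "inj_on z {..<s}"
    and to: "term_order ord"
    and F: "\<forall>i<s. F i \<in> I \<and> F i \<noteq> 0 \<and> LT ord (F i) = Poly_Mapping.single (z i) 1"
    and G: "is_reduced_GB ord I G"
  shows "is_Z_sep_GB ord I s z G"
proof -
  note A = reduced_parts[OF G]
  note top = term_order_parts[OF to]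
  define zm where "zm i = (Poly_Mapping.single (z i) 1 :: 'x mon)" for i
  have zmk: "Poly_Mapping.keys (zm i) = {z i}" for i unfolding zm_def by simp
  have exg: "\<exists>g. g \<in> G \<and> LT ord g = zm i" if i: "i < s" for i
  proof -
    have Fi: "F i \<in> I" "F i \<noteq> 0" "LT ord (F i) = zm i" using F i unfolding zm_def by blast+
    obtain g where g: "g \<in> G" "mdvd (LT ord g) (zm i)" using A(4)[OF Fi(1,2)] Fi(3) by metis
    have "g \<in> Mideal" "g \<noteq> 0" using g(1) A(2,3) IM by blast+
    then have "LT ord g \<noteq> 0" using LT_nonzero[OF to] by blast
    then have "LT ord g = zm i" using mdvd_to_single[of "LT ord g" "z i"] g(2) unfolding zm_def by simp
    then show ?thesis using g(1) by blast
  qed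
  define gi where "gi i = (SOME g. g \<in> G \<and> LT ord g = zm i)" for i
  have gi: "gi i \<in> G" "LT ord (gi i) = zm i" if "i < s" for i
    using someI_ex[OF exg[OF that]] unfolding gi_def by blast+
  have gi_ne: "gi i \<noteq> 0" if "i < s" for i using gi(1)[OF that] A(3) by auto
  have zkey: "g = gi i" if "g \<in> G" "i < s" "t \<in> Poly_Mapping.keys g" "z i \<in> Poly_Mapping.keys t" for g i t
  proof (rule ccontr)
    assume ne: "g \<noteq> gi i"
    have m: "mdvd (zm i) t" using that(4) unfolding zm_def mdvd_single_iff .
    have "\<not> mdvd (LT ord (gi i)) t" by (rule A(6)[OF that(1) gi(1)[OF that(2)] not_sym[OF ne] that(3)])
    then show False using m gi(2)[OF that(2)] by simp
  qed
  have LCgi: "LC ord (gi i) = 1" if "i < s" for i using A(5) gi(1)[OF that] by blast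
  have keysgi: "ord t (zm i)" if "i < s" "t \<in> Poly_Mapping.keys (gi i)" for i t
    using LT_prop[OF to gi_ne[OF that(1)]] that gi(2) by simp
  define Gh where "Gh = G - gi ` {..<s}"
  have img: "(\<lambda>i. const (1 / LC ord (gi i)) * gi i) ` {..<s} = gi ` {..<s}"
    by (rule image_cong) (simp_all add: LCgi const_one_mult)
  have Geq: "G = gi ` {..<s} \<union> Gh" unfolding Gh_def using gi(1) by blast
  have coh: "coh_Z_separating s z gi"
    unfolding coh_Z_separating_def
  proof (intro conjI allI impI)
    fix i assume i: "i < s"
    show "gi i \<noteq> 0" using gi_ne[OF i] .
    show Mi: "gi i \<in> Mideal" using gi(1)[OF i] A(2) IM by blast
    have lk: "Poly_Mapping.lookup (gi i) (Poly_Mapping.single (z i) 1) = 1"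
      using LCgi[OF i] gi(2)[OF i] unfolding LC_def zm_def by simp
    have "z i \<notin> indets (tail (z i) (gi i))"
    proof
      assume "z i \<in> indets (tail (z i) (gi i))"
      then obtain t where t: "t \<in> Poly_Mapping.keys (tail (z i) (gi i))" "z i \<in> Poly_Mapping.keys t"
        unfolding indets_def by blast
      have tl: "tail (z i) (gi i) = var (z i) - gi i" unfolding tail_def lk by (simp add: const_one_mult)
      have lt: "Poly_Mapping.lookup (tail (z i) (gi i)) t \<noteq> 0" using t(1) by (simp add: in_keys_iff)
      show False
      proof (cases "t = zm i")
        case True
        then show False using lt lk unfolding tl by (simp add: lookup_minus lookup_var zm_def)
      next
        case False
        then have "t \<in> Poly_Mapping.keys (gi i)" using lt unfolding tl
          by (auto simp: lookup_minus lookup_var zm_def in_keys_iff)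
        then have "ord t (zm i)" using keysgi[OF i] by blast
        moreover have "ord (zm i) t" using t(2) unfolding zm_def mdvd_single_iff[symmetric] by (rule mdvd_ord[OF to])
        ultimately show False using False top(3) by blast
      qed
    qed
    then show "z_separating (z i) (gi i)" unfolding z_separating_def using Mi lk by simp
  next
    fix i j assume i: "i < s" and j: "j < s" and ji: "j \<noteq> i"
    show "z i \<notin> indets (gi j)"
    proof
      assume "z i \<in> indets (gi j)"
      then obtain t where t: "t \<in> Poly_Mapping.keys (gi j)" "z i \<in> Poly_Mapping.keys t"
        unfolding indets_def by blast
      have "gi j = gi i" using zkey[OF gi(1)[OF j] i t] .
      then have "zm j = zm i" using gi(2)[OF i] gi(2)[OF j] by simp
      then have "z j = z i" using zmk[of i] zmk[of j] by simp
      then show False using inj i j ji unfolding inj_on_def by blast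
    qed
  qed
  have GhR: "is_reduced_GB ord (I \<inter> Phat (z ` {..<s})) Gh"
    unfolding is_reduced_GB_def is_GB_def
  proof (intro conjI ballI impI allI)
    show "finite Gh" using A(1) unfolding Gh_def by simp
    show "Gh \<subseteq> I \<inter> Phat (z ` {..<s})"
    proof
      fix g assume g: "g \<in> Gh"
      then have gG: "g \<in> G" "g \<notin> gi ` {..<s}" unfolding Gh_def by blast+
      have "g \<in> Phat (z ` {..<s})" unfolding Phat_iff
      proof (rule ballI, rule ccontr)
        fix t assume t: "t \<in> Poly_Mapping.keys g" "Poly_Mapping.keys t \<inter> z ` {..<s} \<noteq> {}"
        then obtain i where i: "i < s" "z i \<in> Poly_Mapping.keys t" by blast
        then show False using zkey[OF gG(1) i(1) t(1) i(2)] gG(2) i(1) by blast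
      qed
      then show "g \<in> I \<inter> Phat (z ` {..<s})" using gG(1) A(2) by blast
    qed
    show "0 \<notin> Gh" using A(3) unfolding Gh_def by blast
  next
    fix f assume f: "f \<in> I \<inter> Phat (z ` {..<s})" "f \<noteq> 0"
    obtain g where g: "g \<in> G" "mdvd (LT ord g) (LT ord f)" using A(4)[of f] f by blast
    have "g \<notin> gi ` {..<s}"
    proof
      assume "g \<in> gi ` {..<s}"
      then obtain i where i: "i < s" "g = gi i" by blast
      then have "mdvd (zm i) (LT ord f)" using g(2) gi(2)[OF i(1)] by simp
      then have zi: "z i \<in> Poly_Mapping.keys (LT ord f)" unfolding zm_def mdvd_single_iff .
      have lf: "LT ord f \<in> Poly_Mapping.keys f" using LT_prop[OF to f(2)] by blast
      have "f \<in> Phat (z ` {..<s})" using f(1) by blast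
      then have "Poly_Mapping.keys (LT ord f) \<inter> z ` {..<s} = {}" using lf unfolding Phat_iff by blast
      then show False using zi i(1) by blast
    qed
    then show "\<exists>g\<in>Gh. mdvd (LT ord g) (LT ord f)" using g unfolding Gh_def by blast
  next
    fix g assume "g \<in> Gh" then show "LC ord g = 1" using A(5) unfolding Gh_def by blast
  next
    fix g g' t assume "g \<in> Gh" "g' \<in> Gh" "g' \<noteq> g" "t \<in> Poly_Mapping.keys g"
    then show "\<not> mdvd (LT ord g') t" using A(6) unfolding Gh_def by blast
  qed
  have "Z_sep_GB_data ord I s z gi Gh"
    unfolding Z_sep_GB_data_def
  proof (intro conjI)
    show "is_GB ord I ((\<lambda>i. const (1 / LC ord (gi i)) * gi i) ` {..<s} \<union> Gh)"
      unfolding img Geq[symmetric] using G unfolding is_reduced_GB_def by blast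
    show "coh_Z_separating s z gi" by (rule coh)
    show "\<forall>i<s. LT ord (gi i) = Poly_Mapping.single (z i) 1" using gi(2) unfolding zm_def by blast
    show "is_reduced_GB ord (I \<inter> Phat (z ` {..<s})) Gh" by (rule GhR)
  qed
  moreover have "G = (\<lambda>i. const (1 / LC ord (gi i)) * gi i) ` {..<s} \<union> Gh" using img Geq by simp
  ultimately show ?thesis unfolding is_Z_sep_GB_def by blast
qed



lemma part_b:
  fixes I :: "('x::finite, 'a::field) mpoly set"
  assumes id: "is_ideal I" and IM: "I \<subseteq> Mideal" and inj: "inj_on z {..<s}"
    and to: "term_order ord"
    and D: "Z_sep_GB_data ord I s z f Gh"
  shows "is_reduced_GB ord I ((\<lambda>i. var (z i) - NF ord (I \<inter> Phat (z ` {..<s})) (tail (z i) (f i))) ` {..<s} \<union> Gh)"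
proof -
  define Z where "Z = z ` {..<s}"
  define J where "J = I \<inter> Phat Z"
  define zm where "zm i = (Poly_Mapping.single (z i) 1 :: 'x mon)" for i
  have zmk: "Poly_Mapping.keys (zm i) = {z i}" for i unfolding zm_def by simp
  note top = term_order_parts[OF to]
  have GB: "is_GB ord I ((\<lambda>i. const (1 / LC ord (f i)) * f i) ` {..<s} \<union> Gh)"
    and coh: "coh_Z_separating s z f"
    and LTf: "\<And>i. i < s \<Longrightarrow> LT ord (f i) = zm i"
    and GhR: "is_reduced_GB ord J Gh"
    using D unfolding Z_sep_GB_data_def J_def Z_def zm_def by blast+
  note GBp = GB[unfolded is_GB_def]
  note H = reduced_parts[OF GhR]
  have cohp: "f i \<noteq> 0" "f i \<in> Mideal" "z_separating (z i) (f i)" if "i < s" for i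
    using coh that unfolding coh_Z_separating_def by blast+
  have cohq: "z j \<notin> indets (f i)" if "i < s" "j < s" "j \<noteq> i" for i j
    using coh that unfolding coh_Z_separating_def by blast
  have zinj: "z i = z j \<longleftrightarrow> i = j" if "i < s" "j < s" for i j
    using inj that unfolding inj_on_def by blast
  define c where "c i = LC ord (f i)" for i
  have c_eq: "c i = Poly_Mapping.lookup (f i) (Poly_Mapping.single (z i) 1)" if "i < s" for i
    unfolding c_def LC_def using LTf[OF that] unfolding zm_def by simp
  have cnz: "c i \<noteq> 0" if "i < s" for i
    using cohp(3)[OF that] c_eq[OF that] unfolding z_separating_def by simp
  define fn where "fn i = const (1 / c i) * f i" for i
  have fnI: "fn i \<in> I" if "i < s" for i
    using GBp that unfolding fn_def c_def by blast
  have keys_fn: "Poly_Mapping.keys (fn i) = Poly_Mapping.keys (f i)" if "i < s" for i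
    unfolding fn_def using keys_const_mult[of "1 / c i" "f i"] cnz[OF that] by simp
  have LTfn: "LT ord (fn i) = zm i" if "i < s" for i
    using LT_keys_eq[OF keys_fn[OF that], of ord] LTf[OF that] by simp
  define T where "T i = tail (z i) (f i)" for i
  have T_eq: "T i = var (z i) - fn i" if "i < s" for i
    unfolding T_def tail_def fn_def c_eq[OF that] ..
  have keysT: "Poly_Mapping.keys (T i) \<subseteq> {zm i} \<union> Poly_Mapping.keys (f i)" if "i < s" for i
  proof -
    have "Poly_Mapping.keys (T i) \<subseteq> Poly_Mapping.keys (var (z i) :: ('x, 'a) mpoly) \<union> Poly_Mapping.keys (fn i)"
      unfolding T_eq[OF that] by (rule keys_diff)
    then show ?thesis unfolding keys_var keys_fn[OF that] zm_def .
  qed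
  have ziT: "z i \<notin> indets (T i)" if "i < s" for i
    using cohp(3)[OF that] unfolding z_separating_def T_def by blast
  have T_Phat: "T i \<in> Phat Z" if i: "i < s" for i
    unfolding Phat_iff
  proof (rule ballI, rule ccontr)
    fix t assume t: "t \<in> Poly_Mapping.keys (T i)" "Poly_Mapping.keys t \<inter> Z \<noteq> {}"
    then obtain j where j: "j < s" "z j \<in> Poly_Mapping.keys t" unfolding Z_def by blast
    show False
    proof (cases "j = i")
      case True
      then show False using ziT[OF i] t(1) j(2) unfolding indets_def by blast
    next
      case False
      have "t \<in> {zm i} \<union> Poly_Mapping.keys (f i)" using keysT[OF i] t(1) by blast
      then show False
      proof
        assume "t \<in> {zm i}"
        then have "z j = z i" using j(2) zmk[of i] by simp
        then show False using zinj[OF j(1) i] False by simp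
      next
        assume "t \<in> Poly_Mapping.keys (f i)"
        then show False using cohq[OF i j(1) False] j(2) unfolding indets_def by blast
      qed
    qed
  qed
  have T_lt: "ord t (zm i) \<and> t \<noteq> zm i" if i: "i < s" and t: "t \<in> Poly_Mapping.keys (T i)" for i t
  proof
    show "t \<noteq> zm i"
    proof
      assume "t = zm i"
      then have "z i \<in> Poly_Mapping.keys t" using zmk by simp
      then show False using ziT[OF i] t unfolding indets_def by blast
    qed
    then have "t \<in> Poly_Mapping.keys (f i)" using keysT[OF i] t by blast
    then show "ord t (zm i)" using LT_prop[OF to cohp(1)[OF i]] LTf[OF i] by simp
  qed
  define h where "h i = NF ord J (T i)" for i
  have hchar: "T i - h i \<in> J" "\<forall>t\<in>Poly_Mapping.keys (h i). \<forall>g\<in>J. g \<noteq> 0 \<longrightarrow> \<not> mdvd (LT ord g) t"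
    if "i < s" for i
    using NF_char[OF to id T_Phat[OF that]] unfolding h_def J_def by blast+
  have h_Phat: "h i \<in> Phat Z" if "i < s" for i
  proof -
    have "T i - h i \<in> Phat Z" using hchar(1)[OF that] unfolding J_def by blast
    then have "T i - (T i - h i) \<in> Phat Z" by (rule Phat_diff[OF T_Phat[OF that]])
    then show ?thesis by simp
  qed
  have h_lt: "ord t (zm i) \<and> t \<noteq> zm i" if i: "i < s" and t: "t \<in> Poly_Mapping.keys (h i)" for i t
  proof -
    have hnz: "h i \<noteq> 0" using t by auto
    define L where "L = LT ord (h i)"
    have hl: "L \<in> Poly_Mapping.keys (h i)" "\<forall>k\<in>Poly_Mapping.keys (h i). ord k L"
      using LT_prop[OF to hnz] unfolding L_def by blast+
    have L: "ord L (zm i) \<and> L \<noteq> zm i"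
    proof (rule ccontr)
      assume nL: "\<not> (ord L (zm i) \<and> L \<noteq> zm i)"
      have zL: "ord (zm i) L"
      proof (cases "L = zm i")
        case True then show ?thesis using top(1) by simp
      next
        case False then show ?thesis using nL top(4) by blast
      qed
      have LnT: "L \<notin> Poly_Mapping.keys (T i)" using T_lt[OF i] nL by blast
      define d where "d = T i - h i"
      have dJ: "d \<in> J" unfolding d_def by (rule hchar(1)[OF i])
      have ld: "Poly_Mapping.lookup d L \<noteq> 0" using LnT hl(1) unfolding d_def
        by (simp add: lookup_minus in_keys_iff)
      then have dnz: "d \<noteq> 0" by auto
      have Ld: "L \<in> Poly_Mapping.keys d" using ld by (simp add: in_keys_iff)
      have allk: "\<forall>k\<in>Poly_Mapping.keys d. ord k L"
      proof
        fix k assume "k \<in> Poly_Mapping.keys d"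
        then have "k \<in> Poly_Mapping.keys (T i) \<union> Poly_Mapping.keys (h i)"
          using keys_diff[of "T i" "h i"] unfolding d_def by blast
        then show "ord k L"
        proof
          assume "k \<in> Poly_Mapping.keys (T i)"
          then have "ord k (zm i)" using T_lt[OF i] by blast
          then show ?thesis using zL top(2) by blast
        next
          assume "k \<in> Poly_Mapping.keys (h i)" then show ?thesis using hl(2) by blast
        qed
      qed
      have "LT ord d = L" by (rule LT_eqI[OF to Ld allk])
      then have "mdvd (LT ord d) L" using mdvd_refl by simp
      then show False using hchar(2)[OF i] hl(1) dJ dnz by blast
    qed
    have tL: "ord t L" using hl(2) t by blast
    have "ord t (zm i)" using top(2)[OF tL] L by blast
    moreover have "t \<noteq> zm i"
    proof
      assume "t = zm i"
      then have "ord (zm i) L" using tL by simp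
      then show False using L top(3) by blast
    qed
    ultimately show ?thesis by blast
  qed
  define S where "S i = var (z i) - h i" for i
  have S_I: "S i \<in> I" if i: "i < s" for i
  proof -
    have e: "S i = fn i + (T i - h i)" unfolding S_def T_eq[OF i] by simp
    have "T i - h i \<in> I" using hchar(1)[OF i] unfolding J_def by blast
    then show ?thesis unfolding e by (rule ideal_parts(2)[OF id fnI[OF i]])
  qed
  have lookS: "Poly_Mapping.lookup (S i) t = (if t = zm i then 1 else 0) - Poly_Mapping.lookup (h i) t" for i t
    unfolding S_def by (simp add: lookup_minus lookup_var zm_def)
  have Szm: "Poly_Mapping.lookup (S i) (zm i) = 1" if i: "i < s" for i
  proof -
    have "zm i \<notin> Poly_Mapping.keys (h i)" using h_lt[OF i] by blast
    then show ?thesis using lookS[of i "zm i"] by (simp add: in_keys_iff)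
  qed
  have keysS: "Poly_Mapping.keys (S i) \<subseteq> {zm i} \<union> Poly_Mapping.keys (h i)" for i
  proof
    fix t assume "t \<in> Poly_Mapping.keys (S i)"
    then have "Poly_Mapping.lookup (S i) t \<noteq> 0" by (simp add: in_keys_iff)
    then show "t \<in> {zm i} \<union> Poly_Mapping.keys (h i)" using lookS[of i t] by (auto simp: in_keys_iff split: if_splits)
  qed
  have SkZ: "zm i \<in> Poly_Mapping.keys (S i)" if "i < s" for i using Szm[OF that] by (simp add: in_keys_iff)
  have LTS: "LT ord (S i) = zm i" if i: "i < s" for i
  proof (rule LT_eqI[OF to SkZ[OF i]])
    show "\<forall>t\<in>Poly_Mapping.keys (S i). ord t (zm i)"
    proof
      fix t assume "t \<in> Poly_Mapping.keys (S i)"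
      then have "t \<in> {zm i} \<union> Poly_Mapping.keys (h i)" using keysS by blast
      then show "ord t (zm i)" using h_lt[OF i] top(1) by blast
    qed
  qed
  have LCS: "LC ord (S i) = 1" if "i < s" for i unfolding LC_def LTS[OF that] Szm[OF that] ..
  have Snz: "S i \<noteq> 0" if "i < s" for i using SkZ[OF that] by auto
  have S_Phat_keys: "z j \<notin> Poly_Mapping.keys t" if i: "i < s" and j: "j < s" "j \<noteq> i"
    and t: "t \<in> Poly_Mapping.keys (S i)" for i j t
  proof -
    have "t \<in> {zm i} \<union> Poly_Mapping.keys (h i)" using keysS t by blast
    then show ?thesis
    proof
      assume "t \<in> {zm i}"
      then show ?thesis using zmk[of i] zinj[OF j(1) i] j(2) by simp
    next
      assume "t \<in> Poly_Mapping.keys (h i)"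
      then have "Poly_Mapping.keys t \<inter> Z = {}" using h_Phat[OF i] unfolding Phat_iff by blast
      then show ?thesis using j(1) unfolding Z_def by blast
    qed
  qed
  have GhZ: "Poly_Mapping.keys t \<inter> Z = {}" if "g \<in> Gh" "t \<in> Poly_Mapping.keys g" for g t
  proof -
    have "g \<in> Phat Z" using H(2) that(1) unfolding J_def by blast
    then show ?thesis using that(2) unfolding Phat_iff by blast
  qed
  have GhI: "g \<in> I" "g \<noteq> 0" if "g \<in> Gh" for g using H(2,3) that unfolding J_def by blast+
  have Seq: "(\<lambda>i. var (z i) - NF ord (I \<inter> Phat (z ` {..<s})) (tail (z i) (f i))) = S"
    unfolding S_def h_def T_def J_def Z_def ..
  show ?thesis
    unfolding Seq is_reduced_GB_def is_GB_def
  proof (intro conjI ballI impI allI)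
    show "finite (S ` {..<s} \<union> Gh)" using H(1) by simp
    show "S ` {..<s} \<union> Gh \<subseteq> I" using S_I GhI by blast
    show "0 \<notin> S ` {..<s} \<union> Gh" using Snz H(3) by force
  next
    fix g assume g: "g \<in> I" "g \<noteq> 0"
    obtain g' where g': "g' \<in> (\<lambda>i. const (1 / LC ord (f i)) * f i) ` {..<s} \<union> Gh"
      "mdvd (LT ord g') (LT ord g)" using GBp g by blast
    show "\<exists>q\<in>S ` {..<s} \<union> Gh. mdvd (LT ord q) (LT ord g)"
    proof (cases "g' \<in> Gh")
      case True then show ?thesis using g'(2) by blast
    next
      case False
      then obtain i where i: "i < s" "g' = fn i" using g'(1) unfolding fn_def c_def by blast
      then have "mdvd (LT ord (S i)) (LT ord g)" using g'(2) LTfn[OF i(1)] LTS[OF i(1)] by simp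
      then show ?thesis using i(1) by blast
    qed
  next
    fix g assume "g \<in> S ` {..<s} \<union> Gh"
    then show "LC ord g = 1" using LCS H(5) by blast
  next
    fix g g' t assume g: "g \<in> S ` {..<s} \<union> Gh" and g': "g' \<in> S ` {..<s} \<union> Gh"
      and ne: "g' \<noteq> g" and t: "t \<in> Poly_Mapping.keys g"
    show "\<not> mdvd (LT ord g') t"
    proof (cases "g' \<in> S ` {..<s}")
      case True
      then obtain j where j: "j < s" "g' = S j" by blast
      have "z j \<notin> Poly_Mapping.keys t"
      proof (cases "g \<in> S ` {..<s}")
        case True
        then obtain i where i: "i < s" "g = S i" by blast
        have "j \<noteq> i" using ne i j by blast
        then show ?thesis using S_Phat_keys[OF i(1) j(1)] t i(2) by blast
      next
        case False
        then have "g \<in> Gh" using g by blast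
        then show ?thesis using GhZ t j(1) unfolding Z_def by blast
      qed
      then show ?thesis unfolding j(2) LTS[OF j(1)] zm_def mdvd_single_iff .
    next
      case False
      then have g'Gh: "g' \<in> Gh" using g' by blast
      show ?thesis
      proof (cases "g \<in> Gh")
        case True show ?thesis by (rule H(6)[OF True g'Gh ne t])
      next
        case False
        then obtain i where i: "i < s" "g = S i" using g by blast
        have "t \<in> {zm i} \<union> Poly_Mapping.keys (h i)" using keysS t i(2) by blast
        then show ?thesis
        proof
          assume "t \<in> {zm i}"
          then have tz: "t = zm i" by simp
          show ?thesis
          proof
            assume m: "mdvd (LT ord g') t"
            have "LT ord g' \<noteq> 0" using LT_nonzero[OF to] GhI[OF g'Gh] IM by blast
            then have "LT ord g' = zm i" using mdvd_to_single[of "LT ord g'" "z i"] m tz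
              unfolding zm_def by simp
            moreover have "LT ord g' \<in> Poly_Mapping.keys g'" using LT_prop[OF to GhI(2)[OF g'Gh]] by blast
            ultimately have "Poly_Mapping.keys (zm i) \<inter> Z = {}" using GhZ[OF g'Gh] by metis
            then show False using zmk[of i] i(1) unfolding Z_def by blast
          qed
        next
          assume "t \<in> Poly_Mapping.keys (h i)"
          moreover have "g' \<in> J" "g' \<noteq> 0" using H(2,3) g'Gh by blast+
          ultimately show ?thesis using hchar(2)[OF i(1)] by blast
        qed
      qed
    qed
  qed
qed


theorem proposition2p12:
  fixes I :: "('x::finite, 'a::field) mpoly set"
    and ord :: "'x mon \<Rightarrow> 'x mon \<Rightarrow> bool"
    and s :: nat and z :: "nat \<Rightarrow> 'x"
  assumes "is_ideal I" and "I \<subseteq> Mideal"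
    and "s \<ge> 1" and "inj_on z {..<s}"
    and "Z_separating_order ord I s z"
  shows "(\<forall>G. is_reduced_GB ord I G \<longrightarrow> is_Z_sep_GB ord I s z G) \<and>
         (\<forall>f Gh. Z_sep_GB_data ord I s z f Gh \<longrightarrow>
           (let h = (\<lambda>i. NF ord (I \<inter> Phat (z ` {..<s})) (tail (z i) (f i)));
                S = (\<lambda>i. var (z i) - h i) ` {..<s} \<union> Gh
            in is_reduced_GB ord I S \<and> (\<forall>G. is_reduced_GB ord I G \<longrightarrow> G = S)))"
proof -
  obtain F where F: "\<forall>i<s. F i \<in> I \<and> F i \<noteq> 0 \<and> LT ord (F i) = Poly_Mapping.single (z i) 1"
    and to: "term_order ord"
    using assms(5) unfolding Z_separating_order_def by blast
  have pa: "\<forall>G. is_reduced_GB ord I G \<longrightarrow> is_Z_sep_GB ord I s z G"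
    using part_a[OF assms(1) assms(2) assms(4) to F] by blast
  have pb: "(let h = (\<lambda>i. NF ord (I \<inter> Phat (z ` {..<s})) (tail (z i) (f i)));
                S = (\<lambda>i. var (z i) - h i) ` {..<s} \<union> Gh
            in is_reduced_GB ord I S \<and> (\<forall>G. is_reduced_GB ord I G \<longrightarrow> G = S))"
    if D: "Z_sep_GB_data ord I s z f Gh" for f Gh
  proof -
    have R: "is_reduced_GB ord I ((\<lambda>i. var (z i) - NF ord (I \<inter> Phat (z ` {..<s})) (tail (z i) (f i))) ` {..<s} \<union> Gh)"
      by (rule part_b[OF assms(1) assms(2) assms(4) to D])
    have U: "\<forall>G. is_reduced_GB ord I G \<longrightarrow> G = (\<lambda>i. var (z i) - NF ord (I \<inter> Phat (z ` {..<s})) (tail (z i) (f i))) ` {..<s} \<union> Gh"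
      using reduced_unique[OF to assms(1) _ R] by blast
    show ?thesis unfolding Let_def using R U by blast
  qed
  show ?thesis using pa pb by blast
qed

end
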